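(* Let $C$ be a finite set of constraints over propositional variables $x\in\{\pm1\}^n$ and real variables $y\in\mathbb{R}^m$, let $F=\bigwedge_{c\in C}c$, and let $w_c>0$ be a weight for each $c\in C$. Let $\mathcal{F}_w(a,b)=\sum_{c\in C}w_c\, f_c(a,b)$ for $(a,b)\in[-1,1]^n\times\mathbb{R}^m$, where $f_c(a,b)$ is the multilinear extension (in the propositional variables) of the extended Walsh–Fourier expansion of $c$, as defined in the context. Then $F$ is satisfiable if and only if $$\min_{a\in[-1,1]^n,\ b\in\mathbb{R}^m}\mathcal{F}_w(a,b)=-\sum_{c\in C}w_c .$$
   Context: Truth values are encoded as $-1$ = True and $+1$ = False. There are $k$ atoms $\alpha_1,\dots,\alpha_k$; each atom is a linear (in)equality $\alpha_i:\ \sum_{j=1}^m q_{i,j}y_j-q_{i,0}\bowtie_i 0$ with $\bowtie_i\in\{=,<,\le,>,\ge\}$ and real coefficients $q_{i,j}$. Its indicator is $\delta_i(y)=-1$ if $\alpha_i$ holds at $y$ and $\delta_i(y)=1$ otherwise; write $\delta(y)=(\delta_1(y),\dots,\delta_k(y))$. Each constraint $c\in C$ is a Boolean combination of the propositional variables and atoms, represented as $f_c:\{\pm1\}^n\times\mathbb{R}^m\to\{\pm1\}$ with $f_c(x,y)=-1$ iff $c$ is true at $(x,y)$; thus $f_c(x,y)=\tilde f_c(x,\delta(y))$ for a Boolean function $\tilde f_c:\{\pm1\}^{n+k}\to\{\pm1\}$. For $S\subseteq[n]$, $T\subseteq[k]$ put $\hat f_c(S,T)=\mathbb{E}_{(x,z)\sim\{\pm1\}^{n+k}\text{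 uniform}}\big[\tilde f_c(x,z)\prod_{i\in S}x_i\prod_{i\in T}z_i\big]$, so that $f_c(x,y)=\sum_{S\subseteq[n],T\subseteq[k]}\hat f_c(S,T)\prod_{i\in S}x_i\prod_{i\in T}\delta_i(y)$ (the extended Walsh–Fourier expansion). This formula is used to define $f_c(a,b)$ for all $a\in[-1,1]^n$, $b\in\mathbb{R}^m$ by replacing $x_i$ with $a_i$ and $y$ with $b$. $F$ is satisfiable iff there exist $x\in\{\pm1\}^n$, $y\in\mathbb{R}^m$ with $f_c(x,y)=-1$ for all $c\in C$. *)

theory Defs
  imports Complex_Main "HOL-Library.FuncSet"
begin

text \<open>Truth values: -1 = True, +1 = False.\<close>

datatype cmp = CEq | CLt | CLe | CGt | CGe

fun cmp_holds :: "cmp \<Rightarrow> real \<Rightarrow> bool" where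
  "cmp_holds CEq t = (t = 0)"
| "cmp_holds CLt t = (t < 0)"
| "cmp_holds CLe t = (t \<le> 0)"
| "cmp_holds CGt t = (t > 0)"
| "cmp_holds CGe t = (t \<ge> 0)"

definition pm_cube :: "nat \<Rightarrow> (nat \<Rightarrow> real) set" where
  "pm_cube n = ({..<n} \<rightarrow>\<^sub>E {-1, 1})"

definition atom_holds ::
  "nat \<Rightarrow> (nat \<Rightarrow> nat \<Rightarrow> real) \<Rightarrow> (nat \<Rightarrow> cmp) \<Rightarrow> nat \<Rightarrow> (nat \<Rightarrow> real) \<Rightarrow> bool" where
  "atom_holds m q rel i y = cmp_holds (rel i) ((\<Sum>j=1..m. q i j * y j) - q i 0)"

definition delta ::
  "nat \<Rightarrow> (nat \<Rightarrow> nat \<Rightarrow> real) \<Rightarrow> (nat \<Rightarrow> cmp) \<Rightarrow> nat \<Rightarrow> (nat \<Rightarrow> real) \<Rightarrow> real" where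
  "delta m q rel i y = (if atom_holds m q rel i y then -1 else 1)"

definition delta_vec ::
  "nat \<Rightarrow> nat \<Rightarrow> (nat \<Rightarrow> nat \<Rightarrow> real) \<Rightarrow> (nat \<Rightarrow> cmp) \<Rightarrow> (nat \<Rightarrow> real) \<Rightarrow> (nat \<Rightarrow> real)" where
  "delta_vec m k q rel y = restrict (\<lambda>i. delta m q rel i y) {..<k}"

definition walsh_coeff ::
  "nat \<Rightarrow> nat \<Rightarrow> ((nat \<Rightarrow> real) \<Rightarrow> (nat \<Rightarrow> real) \<Rightarrow> real) \<Rightarrow> nat set \<Rightarrow> nat set \<Rightarrow> real" where
  "walsh_coeff n k g S T =
     (\<Sum>x\<in>pm_cube n. \<Sum>z\<in>pm_cube k. g x z * (\<Prod>i\<in>S. x i) * (\<Prod>i\<in>T. z i)) / 2 ^ (n + k)"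

definition walsh_ext ::
  "nat \<Rightarrow> nat \<Rightarrow> nat \<Rightarrow> (nat \<Rightarrow> nat \<Rightarrow> real) \<Rightarrow> (nat \<Rightarrow> cmp) \<Rightarrow>
   ((nat \<Rightarrow> real) \<Rightarrow> (nat \<Rightarrow> real) \<Rightarrow> real) \<Rightarrow> (nat \<Rightarrow> real) \<Rightarrow> (nat \<Rightarrow> real) \<Rightarrow> real" where
  "walsh_ext n m k q rel g a b =
     (\<Sum>S\<in>Pow {..<n}. \<Sum>T\<in>Pow {..<k}.
        walsh_coeff n k g S T * (\<Prod>i\<in>S. a i) * (\<Prod>i\<in>T. delta m q rel i b))"

definition weighted_obj ::
  "nat \<Rightarrow> nat \<Rightarrow> nat \<Rightarrow> (nat \<Rightarrow> nat \<Rightarrow> real) \<Rightarrow> (nat \<Rightarrow> cmp) \<Rightarrow> 'c set \<Rightarrow>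
   ('c \<Rightarrow> (nat \<Rightarrow> real) \<Rightarrow> (nat \<Rightarrow> real) \<Rightarrow> real) \<Rightarrow> ('c \<Rightarrow> real) \<Rightarrow>
   (nat \<Rightarrow> real) \<Rightarrow> (nat \<Rightarrow> real) \<Rightarrow> real" where
  "weighted_obj n m k q rel C f w a b = (\<Sum>c\<in>C. w c * walsh_ext n m k q rel (f c) a b)"

definition satisfiable ::
  "nat \<Rightarrow> nat \<Rightarrow> nat \<Rightarrow> (nat \<Rightarrow> nat \<Rightarrow> real) \<Rightarrow> (nat \<Rightarrow> cmp) \<Rightarrow> 'c set \<Rightarrow>
   ('c \<Rightarrow> (nat \<Rightarrow> real) \<Rightarrow> (nat \<Rightarrow> real) \<Rightarrow> real) \<Rightarrow> bool" where
  "satisfiable n m k q rel C f =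
     (\<exists>x\<in>pm_cube n. \<exists>y::nat \<Rightarrow> real. \<forall>c\<in>C. f c x (delta_vec m k q rel y) = -1)"

definition unit_box :: "nat \<Rightarrow> (nat \<Rightarrow> real) set" where
  "unit_box n = {a. \<forall>i<n. -1 \<le> a i \<and> a i \<le> 1}"

end

theory Submission
  imports Defs
begin

definition wt :: "nat \<Rightarrow> (nat \<Rightarrow> real) \<Rightarrow> (nat \<Rightarrow> real) \<Rightarrow> real" where
  "wt n a x = (\<Prod>i<n. (1 + a i * x i) / 2)"

lemma sum_pow_prod:
  fixes u :: "nat \<Rightarrow> real"
  assumes "finite I"
  shows "(\<Sum>S\<in>Pow I. \<Prod>i\<in>S. u i) = (\<Prod>i\<in>I. u i + 1)"
  using prod_add[OF assms, of u "\<lambda>_. 1"] by simp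

lemma wt_cube:
  assumes "a \<in> pm_cube n" "x \<in> pm_cube n"
  shows "wt n a x = (if a = x then 1 else 0)"
proof (cases "a = x")
  case True
  have "(1 + a i * x i) / 2 = 1" if "i < n" for i
  proof -
    have "x i = 1 \<or> x i = -1" using assms that unfolding pm_cube_def by (auto simp: PiE_iff)
    then show ?thesis using True by auto
  qed
  then show ?thesis using True unfolding wt_def by simp
next
  case False
  then obtain i where "a i \<noteq> x i" by auto
  moreover have "i < n"
    using assms \<open>a i \<noteq> x i\<close> unfolding pm_cube_def
    by (metis PiE_arb lessThan_iff)
  moreover have "a i = 1 \<or> a i = -1" "x i = 1 \<or> x i = -1"
    using assms \<open>i < n\<close> unfolding pm_cube_def by (auto simp: PiE_iff)
  ultimately have "(1 + a i * x i) / 2 = 0" by auto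
  then have "wt n a x = 0" unfolding wt_def
    using \<open>i < n\<close> by (intro prod_zero) auto
  then show ?thesis using False by simp
qed

lemma wt_nonneg:
  assumes "a \<in> unit_box n" "x \<in> pm_cube n"
  shows "wt n a x \<ge> 0"
  unfolding wt_def
proof (rule prod_nonneg)
  fix i assume "i \<in> {..<n}"
  then have "-1 \<le> a i" "a i \<le> 1" "x i = 1 \<or> x i = -1"
    using assms unfolding unit_box_def pm_cube_def by (auto simp: PiE_iff)
  then show "0 \<le> (1 + a i * x i) / 2" by auto
qed

lemma wt_sum:
  "(\<Sum>x\<in>pm_cube n. wt n a x) = 1"
proof -
  have "(\<Prod>i<n. \<Sum>v\<in>{-1,1::real}. (1 + a i * v) / 2) =
        (\<Sum>x\<in>pm_cube n. \<Prod>i<n. (1 + a i * x i) / 2)"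
    unfolding pm_cube_def by (rule prod_sum_PiE) auto
  moreover have "(\<Prod>i<n. \<Sum>v\<in>{-1,1::real}. (1 + a i * v) / 2) = 1"
    by (simp add: field_simps)
  ultimately show ?thesis unfolding wt_def by simp
qed

lemma delta_vec_cube: "delta_vec m k q rel y \<in> pm_cube k"
  unfolding delta_vec_def pm_cube_def delta_def by auto

lemma finite_cube: "finite (pm_cube n)"
  unfolding pm_cube_def by (intro finite_PiE) auto

lemma swap4:
  fixes h :: "'a \<Rightarrow> 'b \<Rightarrow> 'c \<Rightarrow> 'd \<Rightarrow> real"
  shows "(\<Sum>S\<in>A. \<Sum>T\<in>B. \<Sum>x\<in>X. \<Sum>z\<in>Z. h S T x z) = (\<Sum>x\<in>X. \<Sum>z\<in>Z. \<Sum>S\<in>A. \<Sum>T\<in>B. h S T x z)"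
proof -
  have "(\<Sum>S\<in>A. \<Sum>T\<in>B. \<Sum>x\<in>X. \<Sum>z\<in>Z. h S T x z) = (\<Sum>S\<in>A. \<Sum>x\<in>X. \<Sum>T\<in>B. \<Sum>z\<in>Z. h S T x z)"
    by (rule sum.cong[OF refl], rule sum.swap)
  also have "\<dots> = (\<Sum>x\<in>X. \<Sum>S\<in>A. \<Sum>T\<in>B. \<Sum>z\<in>Z. h S T x z)" by (rule sum.swap)
  also have "\<dots> = (\<Sum>x\<in>X. \<Sum>S\<in>A. \<Sum>z\<in>Z. \<Sum>T\<in>B. h S T x z)"
    by (rule sum.cong[OF refl], rule sum.cong[OF refl], rule sum.swap)
  also have "\<dots> = (\<Sum>x\<in>X. \<Sum>z\<in>Z. \<Sum>S\<in>A. \<Sum>T\<in>B. h S T x z)"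
    by (rule sum.cong[OF refl], rule sum.swap)
  finally show ?thesis .
qed

lemma walsh_ext_eq:
  "walsh_ext n m k q rel g a b =
     (\<Sum>x\<in>pm_cube n. wt n a x * g x (delta_vec m k q rel b))"
proof -
  define d where "d i = delta m q rel i b" for i
  define X where "X = pm_cube n"
  define Z where "Z = pm_cube k"
  have fX: "finite X" and fZ: "finite Z" unfolding X_def Z_def by (auto simp: finite_cube)
  have "walsh_ext n m k q rel g a b =
     (\<Sum>S\<in>Pow {..<n}. \<Sum>T\<in>Pow {..<k}. \<Sum>x\<in>X. \<Sum>z\<in>Z.
        g x z * ((\<Prod>i\<in>S. x i * a i) / 2^n) * ((\<Prod>i\<in>T. z i * d i) / 2^k))"
    unfolding walsh_ext_def walsh_coeff_def X_def[symmetric] Z_def[symmetric] d_def[symmetric]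
    apply (intro sum.cong refl)
    apply (simp add: sum_divide_distrib sum_distrib_left sum_distrib_right)
    apply (intro sum.cong refl)
    apply (simp add: prod.distrib power_add field_simps)
    done
  also have "\<dots> = (\<Sum>x\<in>X. \<Sum>z\<in>Z. \<Sum>S\<in>Pow {..<n}. \<Sum>T\<in>Pow {..<k}.
        g x z * ((\<Prod>i\<in>S. x i * a i) / 2^n) * ((\<Prod>i\<in>T. z i * d i) / 2^k))"
    by (rule swap4)
  also have "\<dots> = (\<Sum>x\<in>X. \<Sum>z\<in>Z. g x z * wt n a x * wt k d z)"
  proof (intro sum.cong refl)
    fix x z
    have "(\<Sum>S\<in>Pow {..<n}. \<Sum>T\<in>Pow {..<k}.
        g x z * ((\<Prod>i\<in>S. x i * a i) / 2^n) * ((\<Prod>i\<in>T. z i * d i) / 2^k)) =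
        g x z * ((\<Sum>S\<in>Pow {..<n}. \<Prod>i\<in>S. x i * a i) / 2^n) * ((\<Sum>T\<in>Pow {..<k}. \<Prod>i\<in>T. z i * d i) / 2^k)"
      by (simp only: mult.assoc sum_distrib_left[symmetric] sum_product sum_divide_distrib)
    also have "\<dots> = g x z * ((\<Prod>i<n. x i * a i + 1) / (\<Prod>i<n. 2)) * ((\<Prod>i<k. z i * d i + 1) / (\<Prod>i<k. 2))"
      by (simp add: sum_pow_prod)
    also have "\<dots> = g x z * wt n a x * wt k d z"
      unfolding wt_def prod_dividef[symmetric] by (simp add: algebra_simps)
    finally show "(\<Sum>S\<in>Pow {..<n}. \<Sum>T\<in>Pow {..<k}.
        g x z * ((\<Prod>i\<in>S. x i * a i) / 2^n) * ((\<Prod>i\<in>T. z i * d i) / 2^k)) = g x z * wt n a x * wt k d z" .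
  qed
  also have "\<dots> = (\<Sum>x\<in>X. wt n a x * g x (delta_vec m k q rel b))"
  proof (intro sum.cong refl)
    fix x
    have "\<And>z. z \<in> Z \<Longrightarrow> wt k d z = (if delta_vec m k q rel b = z then 1 else 0)"
    proof -
      fix z assume "z \<in> Z"
      have "wt k d z = wt k (delta_vec m k q rel b) z"
        unfolding wt_def d_def delta_vec_def by (intro prod.cong) auto
      then show "wt k d z = (if delta_vec m k q rel b = z then 1 else 0)"
        using wt_cube[OF delta_vec_cube \<open>z \<in> Z\<close>[unfolded Z_def]] by simp
    qed
    then have "(\<Sum>z\<in>Z. g x z * wt n a x * wt k d z) =
       (\<Sum>z\<in>Z. if delta_vec m k q rel b = z then g x z * wt n a x else 0)"
      by (intro sum.cong) auto
    also have "\<dots> = wt n a x * g x (delta_vec m k q rel b)"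
      using fZ delta_vec_cube[of m k q rel b] by (simp add: Z_def)
    finally show "(\<Sum>z\<in>Z. g x z * wt n a x * wt k d z) = wt n a x * g x (delta_vec m k q rel b)" .
  qed
  finally show ?thesis unfolding X_def .
qed

lemma walsh_ext_ge:
  assumes "a \<in> unit_box n" "\<forall>x\<in>pm_cube n. \<forall>z\<in>pm_cube k. g x z \<in> {-1, 1}"
  shows "walsh_ext n m k q rel g a b \<ge> -1"
proof -
  have "(\<Sum>x\<in>pm_cube n. wt n a x * (-1)) \<le> (\<Sum>x\<in>pm_cube n. wt n a x * g x (delta_vec m k q rel b))"
  proof (rule sum_mono)
    fix x assume x: "x \<in> pm_cube n"
    have "g x (delta_vec m k q rel b) \<in> {-1, 1}" using assms(2) x delta_vec_cube by blast
    then have "g x (delta_vec m k q rel b) \<ge> -1" by auto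
    then show "wt n a x * (-1) \<le> wt n a x * g x (delta_vec m k q rel b)"
      using wt_nonneg[OF assms(1) x] by (intro mult_left_mono) auto
  qed
  then show ?thesis using wt_sum[of n a] by (simp add: walsh_ext_eq sum_negf)
qed

lemma pm_box: assumes "x \<in> pm_cube n" shows "x \<in> unit_box n"
  unfolding unit_box_def
proof (intro CollectI allI impI)
  fix i assume "i < n"
  then have "x i = 1 \<or> x i = -1" using assms unfolding pm_cube_def by (auto simp: PiE_iff)
  then show "-1 \<le> x i \<and> x i \<le> 1" by auto
qed

theorem theorem1:
  fixes n m k :: nat
    and q :: "nat \<Rightarrow> nat \<Rightarrow> real"
    and rel :: "nat \<Rightarrow> cmp"
    and C :: "'c set"
    and f :: "'c \<Rightarrow> (nat \<Rightarrow> real) \<Rightarrow> (nat \<Rightarrow> real) \<Rightarrow> real"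
    and w :: "'c \<Rightarrow> real"
  assumes "finite C"
    and "\<forall>c\<in>C. \<forall>x\<in>pm_cube n. \<forall>z\<in>pm_cube k. f c x z \<in> {-1, 1}"
    and "\<forall>c\<in>C. w c > 0"
  shows "satisfiable n m k q rel C f \<longleftrightarrow>
    (\<exists>a\<in>unit_box n. \<exists>b::nat \<Rightarrow> real.
       weighted_obj n m k q rel C f w a b = - (\<Sum>c\<in>C. w c) \<and>
       (\<forall>a'\<in>unit_box n. \<forall>b'::nat \<Rightarrow> real.
          weighted_obj n m k q rel C f w a b \<le> weighted_obj n m k q rel C f w a' b'))"
proof -
  have lower: "weighted_obj n m k q rel C f w a b \<ge> - (\<Sum>c\<in>C. w c)" if "a \<in> unit_box n" for a b
  proof -
    have "(\<Sum>c\<in>C. w c * (-1)) \<le> weighted_obj n m k q rel C f w a b"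
      unfolding weighted_obj_def
      using assms(2,3) walsh_ext_ge[OF that] by (intro sum_mono mult_left_mono) auto
    then show ?thesis by (simp add: sum_negf)
  qed
  show ?thesis
  proof
    assume "satisfiable n m k q rel C f"
    then obtain x y where x: "x \<in> pm_cube n" and xy: "\<forall>c\<in>C. f c x (delta_vec m k q rel y) = -1"
      unfolding satisfiable_def by blast
    have "walsh_ext n m k q rel (f c) x y = -1" if "c \<in> C" for c
    proof -
      have "walsh_ext n m k q rel (f c) x y =
          (\<Sum>x'\<in>pm_cube n. if x = x' then f c x' (delta_vec m k q rel y) else 0)"
        unfolding walsh_ext_eq by (intro sum.cong) (auto simp: wt_cube[OF x])
      also have "\<dots> = -1" using x xy that finite_cube[of n] by simp
      finally show ?thesis .
    qed
    then have eq: "weighted_obj n m k q rel C f w x y = - (\<Sum>c\<in>C. w c)"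
      unfolding weighted_obj_def by (simp add: sum_negf)
    show "\<exists>a\<in>unit_box n. \<exists>b::nat \<Rightarrow> real.
       weighted_obj n m k q rel C f w a b = - (\<Sum>c\<in>C. w c) \<and>
       (\<forall>a'\<in>unit_box n. \<forall>b'::nat \<Rightarrow> real.
          weighted_obj n m k q rel C f w a b \<le> weighted_obj n m k q rel C f w a' b')"
    proof (intro bexI[OF _ pm_box[OF x]] exI[of _ y] conjI eq ballI allI)
      fix a' b' assume "a' \<in> unit_box n"
      from lower[OF this, of b'] eq show "weighted_obj n m k q rel C f w x y \<le> weighted_obj n m k q rel C f w a' b'"
        by linarith
    qed
  next
    assume "\<exists>a\<in>unit_box n. \<exists>b::nat \<Rightarrow> real.
       weighted_obj n m k q rel C f w a b = - (\<Sum>c\<in>C. w c) \<and>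
       (\<forall>a'\<in>unit_box n. \<forall>b'::nat \<Rightarrow> real.
          weighted_obj n m k q rel C f w a b \<le> weighted_obj n m k q rel C f w a' b')"
    then obtain a b where a: "a \<in> unit_box n"
      and eq: "weighted_obj n m k q rel C f w a b = - (\<Sum>c\<in>C. w c)" by blast
    define z where "z = delta_vec m k q rel b"
    define x0 :: "nat \<Rightarrow> real" where "x0 = (\<lambda>i. if i < n then (if a i \<ge> 0 then 1 else -1) else undefined)"
    have x0: "x0 \<in> pm_cube n" unfolding x0_def pm_cube_def by (auto simp: PiE_iff extensional_def)
    have wpos: "wt n a x0 > 0"
      unfolding wt_def
    proof (rule prod_pos)
      fix i assume "i \<in> {..<n}"
      then show "0 < (1 + a i * x0 i) / 2" unfolding x0_def by auto
    qed
    have each: "walsh_ext n m k q rel (f c) a b = -1" if c: "c \<in> C" for c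
    proof (rule ccontr)
      assume "walsh_ext n m k q rel (f c) a b \<noteq> -1"
      moreover have "walsh_ext n m k q rel (f c) a b \<ge> -1"
        using assms(2) c by (intro walsh_ext_ge[OF a]) blast
      ultimately have gt: "walsh_ext n m k q rel (f c) a b > -1" by linarith
      have "(\<Sum>c\<in>C. w c * (-1)) < (\<Sum>c\<in>C. w c * walsh_ext n m k q rel (f c) a b)"
      proof (rule sum_strict_mono_ex1[OF assms(1)])
        show "\<forall>c\<in>C. w c * - 1 \<le> w c * walsh_ext n m k q rel (f c) a b"
          using assms(2,3) walsh_ext_ge[OF a] by (intro ballI mult_left_mono) auto
        show "\<exists>c\<in>C. w c * - 1 < w c * walsh_ext n m k q rel (f c) a b"
          using c gt assms(3) by (intro bexI[of _ c] mult_strict_left_mono) auto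
      qed
      then show False using eq unfolding weighted_obj_def by (simp add: sum_negf)
    qed
    have "f c x0 z = -1" if c: "c \<in> C" for c
    proof (rule ccontr)
      assume ne: "f c x0 z \<noteq> -1"
      have vals: "\<forall>x\<in>pm_cube n. f c x z \<ge> -1"
      proof
        fix x assume "x \<in> pm_cube n"
        then have "f c x z \<in> {-1, 1}" using assms(2) c delta_vec_cube[of m k q rel b] unfolding z_def by blast
        then show "f c x z \<ge> -1" by auto
      qed
      have "(\<Sum>x\<in>pm_cube n. wt n a x * (-1)) < (\<Sum>x\<in>pm_cube n. wt n a x * f c x z)"
      proof (rule sum_strict_mono_ex1[OF finite_cube])
        show "\<forall>x\<in>pm_cube n. wt n a x * - 1 \<le> wt n a x * f c x z"
          using vals wt_nonneg[OF a] by (intro ballI mult_left_mono) auto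
        have "f c x0 z > -1" using vals x0 ne by force
        then show "\<exists>x\<in>pm_cube n. wt n a x * - 1 < wt n a x * f c x z"
          using x0 wpos by (intro bexI[of _ x0] mult_strict_left_mono) auto
      qed
      then show False using each[OF c] wt_sum[of n a]
        by (simp add: walsh_ext_eq z_def sum_negf)
    qed
    then show "satisfiable n m k q rel C f"
      unfolding satisfiable_def z_def using x0 by blast
  qed
qed

end
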